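(* Let $H$ be a $3$-uniform hypergraph and let $v,v'$ be distinct vertices of $H$. Suppose a path $wuw'$ of length $2$ is $(p,\epsilon)$-admissible in the graph $H_v\cap H_{v'}$. Then the $4$-cycle $vwv'w'$ is $(p,\epsilon)$-disk-coverable in $H$.
   Context: A $3$-uniform hypergraph is identified with the $2$-dimensional simplicial complex whose facets are its edges. The $1$-skeleton $\mathcal S(H)$ is the graph on $V(H)$ whose edges are the pairs $xy$ with $xyz\in E(H)$ for some $z$. The link graph $H_u$ of $u\in V(H)$ is the graph on $V(H)\setminus\{u\}$ with edges $vw$ for which $uvw\in E(H)$; $H_v\cap H_{v'}$ is the graph on the common vertex set whose edges are those in both links. A disk is a $3$-uniform hypergraph $D$ whose associated simplicial complex is homeomorphic to the closed $2$-dimensional disk; $\partial D$ is its boundary cycle in $\mathcal S(D)$ and $V^\circ(D)=V(D)\setminus V(\partial D)$. A disk with at least two edges is boundary-inducing if $\partial D$ is an induced subgraph of $\mathcal S(D)$. A cycle $C\subseteq\mathcal S(H)$ is $(p,\epsilon)$-disk-coverable if, choosing $U\subseteq V(H)$ by including each vertex independently with probability $p$, with probability at least $1-\epsilon$ there is a boundary-inducing disk $D\subseteq H$ with $\partial D=C$ and $V^\circ(D)\subseteq U$. For a graph $G$ and a path $wuw'$ of length $2$ in $G$: choose $U\subseteq V(G)\setminus\{u\}$ by including each vertex other than $u$ independently with probability $p$; the path $wuw'$ is $(p,\epsilon)$-admissible in $G$ if with probability at least $1-\epsilon$ the graph $G$ contains a path $ww_1\cdots w_{k-1}w'$ of length $k\ge2$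 from $w$ to $w'$ with $w_1,\ldots,w_{k-1}\in U$. *)

theory Defs
  imports "HOL-Analysis.Analysis"
begin

definition hypergraph3 :: "'a set \<Rightarrow> 'a set set \<Rightarrow> bool" where
  "hypergraph3 V E \<longleftrightarrow> finite V \<and> (\<forall>e\<in>E. e \<subseteq> V \<and> card e = 3)"

definition skeleton :: "'a set set \<Rightarrow> 'a set set" where
  "skeleton E = {{x, y} | x y. x \<noteq> y \<and> (\<exists>e\<in>E. {x, y} \<subseteq> e)}"

(* edge set of the link graph H_u (vertex set V(H) - {u}) *)
definition link_edges :: "'a set set \<Rightarrow> 'a \<Rightarrow> 'a set set" where
  "link_edges E u = {{x, y} | x y. x \<noteq> y \<and> {u, x, y} \<in> E}"

definition is_path :: "'a set \<Rightarrow> 'a set set \<Rightarrow> 'a list \<Rightarrow> bool" where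
  "is_path VG EG xs \<longleftrightarrow> xs \<noteq> [] \<and> distinct xs \<and> set xs \<subseteq> VG \<and>
     (\<forall>i. Suc i < length xs \<longrightarrow> {xs ! i, xs ! Suc i} \<in> EG)"

(* Probability that a random subset U of the finite set S, containing each element
   independently with probability p, satisfies P. *)
definition rand_subset_prob :: "'a set \<Rightarrow> real \<Rightarrow> ('a set \<Rightarrow> bool) \<Rightarrow> real" where
  "rand_subset_prob S p P =
     (\<Sum>U\<in>Pow S. if P U then p ^ card U * (1 - p) ^ card (S - U) else 0)"

definition admissible :: "'a set \<Rightarrow> 'a set set \<Rightarrow> real \<Rightarrow> real \<Rightarrow> 'a \<Rightarrow> 'a \<Rightarrow> 'a \<Rightarrow> bool" where
  "admissible VG EG p eps w u w' \<longleftrightarrow>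
     rand_subset_prob (VG - {u}) p
       (\<lambda>U. \<exists>xs. is_path VG EG xs \<and> length xs \<ge> 3 \<and> hd xs = w \<and> last xs = w' \<and>
               set (butlast (tl xs)) \<subseteq> U) \<ge> 1 - eps"

(* Geometric realisation of the simplicial complex with facets D, as a subspace of
   'a \<Rightarrow> real (product topology): union of the standard simplices on the facets. *)
definition geom_realisation :: "'a set set \<Rightarrow> ('a \<Rightarrow> real) set" where
  "geom_realisation D =
     (\<Union>e\<in>D. {x. (\<forall>i. 0 \<le> x i) \<and> (\<forall>i. i \<notin> e \<longrightarrow> x i = 0) \<and> sum x e = 1})"

definition is_disk :: "'a set set \<Rightarrow> bool" where
  "is_disk D \<longleftrightarrow> finite D \<and> (\<forall>e\<in>D. card e = 3) \<and>
     geom_realisation D homeomorphic cball (0 :: real^2) 1"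

definition boundary_edges :: "'a set set \<Rightarrow> 'a set set" where
  "boundary_edges D = {f \<in> skeleton D. card {e \<in> D. f \<subseteq> e} = 1}"

definition boundary_vertices :: "'a set set \<Rightarrow> 'a set" where
  "boundary_vertices D = \<Union>(boundary_edges D)"

definition interior_vertices :: "'a set set \<Rightarrow> 'a set" where
  "interior_vertices D = \<Union>D - boundary_vertices D"

definition boundary_inducing :: "'a set set \<Rightarrow> bool" where
  "boundary_inducing D \<longleftrightarrow> is_disk D \<and> card D \<ge> 2 \<and>
     (\<forall>f\<in>skeleton D. f \<subseteq> boundary_vertices D \<longrightarrow> f \<in> boundary_edges D)"

(* (p,eps)-disk-coverability of a cycle C (given by its edge set) in H = (V, E) *)
definition disk_coverable :: "'a set \<Rightarrow> 'a set set \<Rightarrow> real \<Rightarrow> real \<Rightarrow> 'a set set \<Rightarrow> bool" where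
  "disk_coverable V E p eps C \<longleftrightarrow>
     C \<subseteq> skeleton E \<and>
     rand_subset_prob V p
       (\<lambda>U. \<exists>D. D \<subseteq> E \<and> boundary_inducing D \<and> boundary_edges D = C \<and>
               interior_vertices D \<subseteq> U) \<ge> 1 - eps"

end

theory Submission
  imports Defs
begin


lemma sum_two_nz:
  fixes F :: "nat \<Rightarrow> real"
  assumes "Suc i < n" and "\<And>j. j < n \<Longrightarrow> j \<noteq> i \<Longrightarrow> j \<noteq> Suc i \<Longrightarrow> F j = 0"
  shows "(\<Sum>j<n. F j) = F i + F (Suc i)"
proof -
  have "(\<Sum>j<n. F j) = (\<Sum>j\<in>{i, Suc i}. F j)"
    by (rule sum.mono_neutral_right) (use assms in auto)
  then show ?thesis by simp
qed

context
  fixes xs :: "'a list" and c c' :: 'a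
  assumes dxs: "distinct xs" and len: "3 \<le> length xs" and cnx: "c \<notin> set xs"
    and c'nx: "c' \<notin> set xs" and cc: "c \<noteq> c'"
begin

definition "kk = length xs - 1"
definition facet :: "'a \<Rightarrow> nat \<Rightarrow> 'a set" where "facet a i = {a, xs!i, xs!Suc i}"
definition "DD = facet c ` {..<kk} \<union> facet c' ` {..<kk}"

definition rr :: "real^2 \<Rightarrow> real" where "rr p = 1 - \<bar>p$2\<bar>"
definition HH :: "nat \<Rightarrow> real^2 \<Rightarrow> real" where "HH j p = max 0 (rr p - \<bar>p$1 - real j * rr p\<bar>)"
definition ff :: "real^2 \<Rightarrow> 'a \<Rightarrow> real" where
  "ff p = (\<lambda>z. if z = c then max (p$2) 0 else if z = c' then max (-(p$2)) 0
     else (\<Sum>j<length xs. if xs!j = z then HH j p else 0))"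
definition gg :: "('a \<Rightarrow> real) \<Rightarrow> real^2" where
  "gg y = (\<chi> i. if i = 1 then (\<Sum>j<length xs. real j * y (xs!j)) else y c - y c')"
definition KK :: "(real^2) set" where
  "KK = {p. 0 \<le> p$1 \<and> p$1 \<le> real kk * rr p \<and> \<bar>p$2\<bar> \<le> 1}"
definition pt :: "nat \<Rightarrow> real \<Rightarrow> real \<Rightarrow> 'a \<Rightarrow> real" where
  "pt i a s = (\<lambda>z. if z = c then max s 0 else if z = c' then max (-s) 0
     else if z = xs!i then real (Suc i) * (1 - \<bar>s\<bar>) - a
     else if z = xs!Suc i then a - real i * (1 - \<bar>s\<bar>) else 0)"

lemma nth_eq[simp]: "i < length xs \<Longrightarrow> j < length xs \<Longrightarrow> (xs!i = xs!j) = (i = j)"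
  using dxs nth_eq_iff_index_eq by blast

lemma nth_ne_c[simp]: "i < length xs \<Longrightarrow> xs!i \<noteq> c" "i < length xs \<Longrightarrow> xs!i \<noteq> c'"
  "i < length xs \<Longrightarrow> c \<noteq> xs!i" "i < length xs \<Longrightarrow> c' \<noteq> xs!i"
  using cnx c'nx nth_mem by fastforce+

lemma kk_len: "Suc kk = length xs" "2 \<le> kk" using len by (auto simp: kk_def)

lemma len_simps[simp]: "0 < length xs" "kk < length xs" "i < kk \<Longrightarrow> i < length xs"
  "i < kk \<Longrightarrow> Suc i < length xs"
  using kk_len by auto

lemma ff_nth: "m < length xs \<Longrightarrow> ff p (xs!m) = HH m p"
proof -
  assume m: "m < length xs"
  have "(\<Sum>j<length xs. if xs!j = xs!m then HH j p else 0) = (\<Sum>j<length xs. if j = m then HH j p else 0)"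
    by (rule sum.cong) (use m in auto)
  then show ?thesis using m by (simp add: ff_def)
qed

lemma ff_other: "z \<notin> set xs \<Longrightarrow> z \<noteq> c \<Longrightarrow> z \<noteq> c' \<Longrightarrow> ff p z = 0"
  unfolding ff_def by (auto intro!: sum.neutral)

lemma ff_pt:
  assumes "p \<in> KK" "i < kk" "real i * rr p \<le> p$1" "p$1 \<le> real (Suc i) * rr p"
  shows "ff p = pt i (p$1) (p$2)"
proof
  fix z
  have r0: "0 \<le> rr p" using assms(1) by (simp add: KK_def rr_def)
  have il: "Suc i < length xs" using assms(2) kk_len by simp
  show "ff p z = pt i (p$1) (p$2) z"
  proof (cases "z \<in> set xs")
    case False
    have "xs!i \<in> set xs" "xs!Suc i \<in> set xs" using il by auto
    with False show ?thesis using cc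
      by (cases "z = c"; cases "z = c'") (auto simp: pt_def ff_def intro!: sum.neutral)
  next
    case True
    then obtain m where m: "m < length xs" "z = xs!m" by (auto simp: in_set_conv_nth)
    have "HH m p = pt i (p$1) (p$2) (xs!m)"
    proof -
      consider "m = i" | "m = Suc i" | "Suc m \<le> i" | "Suc (Suc i) \<le> m" by linarith
      then show ?thesis
      proof cases
        case 1 then show ?thesis using assms m il by (simp add: HH_def pt_def rr_def algebra_simps max_def)
      next
        case 2 then show ?thesis using assms m il by (simp add: HH_def pt_def rr_def algebra_simps max_def)
      next
        case 3
        have "real (Suc m) * rr p \<le> real i * rr p" using 3 r0 by (intro mult_right_mono) auto
        then have "HH m p = 0" using assms(3) by (simp add: HH_def algebra_simps)
        then show ?thesis using 3 m il by (simp add: pt_def)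
      next
        case 4
        have "real (Suc (Suc i)) * rr p \<le> real m * rr p" using 4 r0 by (intro mult_right_mono) auto
        then have "HH m p = 0" using assms(4) by (simp add: HH_def algebra_simps)
        then show ?thesis using 4 m il by (simp add: pt_def)
      qed
    qed
    then show ?thesis using m ff_nth by simp
  qed
qed

lemma gg1: "gg y $ 1 = (\<Sum>j<length xs. real j * y (xs!j))" by (simp add: gg_def)
lemma gg2: "gg y $ 2 = y c - y c'" by (simp add: gg_def)

lemma exists_i:
  assumes "p \<in> KK"
  shows "\<exists>i<kk. real i * rr p \<le> p$1 \<and> p$1 \<le> real (Suc i) * rr p"
proof (cases "rr p = 0")
  case True
  then show ?thesis using assms kk_len by (intro exI[of _ 0]) (auto simp: KK_def)
next
  case False
  have r0: "0 < rr p" using assms False by (auto simp: KK_def rr_def)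
  define t where "t = p$1 / rr p"
  have t0: "0 \<le> t" "t \<le> real kk" using assms r0 by (auto simp: KK_def t_def field_simps)
  have "\<exists>i<kk. real i \<le> t \<and> t \<le> real (Suc i)"
  proof (cases "t < real kk")
    case True
    have f0: "0 \<le> \<lfloor>t\<rfloor>" using t0 by simp
    have fl: "t \<le> 1 + of_int \<lfloor>t\<rfloor>" "of_int \<lfloor>t\<rfloor> \<le> t" by linarith+
    have "real (nat \<lfloor>t\<rfloor>) = of_int \<lfloor>t\<rfloor>" using f0 by simp
    moreover have "nat \<lfloor>t\<rfloor> < kk" using True f0
      by (metis floor_less_iff nat_less_iff of_int_of_nat_eq)
    ultimately show ?thesis
      by (intro exI[of _ "nat \<lfloor>t\<rfloor>"]) (use fl in auto)
  next
    case False
    then show ?thesis using t0 kk_len by (intro exI[of _ "kk - 1"]) (auto simp: of_nat_diff)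
  qed
  then obtain i where i: "i < kk" "real i \<le> t" "t \<le> real (Suc i)" by blast
  have "real i * rr p \<le> t * rr p" "t * rr p \<le> real (Suc i) * rr p"
    using i r0 by (auto intro: mult_right_mono)
  moreover have "t * rr p = p$1" using r0 by (simp add: t_def)
  ultimately show ?thesis using i by auto
qed

lemma pt_in:
  assumes "i < kk" "\<bar>s\<bar> \<le> 1" "real i * (1 - \<bar>s\<bar>) \<le> a" "a \<le> real (Suc i) * (1 - \<bar>s\<bar>)"
  shows "pt i a s \<in> geom_realisation DD"
proof -
  have il: "Suc i < length xs" using assms(1) kk_len by simp
  have ne: "xs!i \<noteq> xs!Suc i" using il by simp
  show ?thesis
  proof (cases "0 \<le> s")
    case True
    have "facet c i \<in> DD" using assms(1) by (simp add: DD_def)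
    moreover have "pt i a s \<in> {x. (\<forall>i. 0 \<le> x i) \<and> (\<forall>z. z \<notin> facet c i \<longrightarrow> x z = 0) \<and> sum x (facet c i) = 1}"
      using assms True il ne cc by (auto simp: pt_def facet_def algebra_simps)
    ultimately show ?thesis unfolding geom_realisation_def by blast
  next
    case False
    have "facet c' i \<in> DD" using assms(1) by (simp add: DD_def)
    moreover have "pt i a s \<in> {x. (\<forall>i. 0 \<le> x i) \<and> (\<forall>z. z \<notin> facet c' i \<longrightarrow> x z = 0) \<and> sum x (facet c' i) = 1}"
      using assms False il ne cc by (auto simp: pt_def facet_def algebra_simps)
    ultimately show ?thesis unfolding geom_realisation_def by blast
  qed
qed

lemma gg_pt:
  assumes "i < kk"
  shows "gg (pt i a s) $ 1 = a" "gg (pt i a s) $ 2 = s"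
proof -
  have il: "Suc i < length xs" using assms(1) kk_len by simp
  have "(\<Sum>j<length xs. real j * pt i a s (xs!j)) = real i * pt i a s (xs!i) + real (Suc i) * pt i a s (xs!Suc i)"
    by (rule sum_two_nz[OF il]) (use il in \<open>auto simp: pt_def\<close>)
  also have "\<dots> = a" using il by (simp add: pt_def algebra_simps)
  finally show "gg (pt i a s) $ 1 = a" by (simp add: gg1)
  show "gg (pt i a s) $ 2 = s" using cc by (simp add: gg2 pt_def max_def)
qed

lemma R_char:
  assumes "y \<in> geom_realisation DD"
  shows "\<exists>i<kk. y = pt i (gg y$1) (gg y$2) \<and> \<bar>gg y$2\<bar> \<le> 1 \<and>
     real i * (1 - \<bar>gg y$2\<bar>) \<le> gg y$1 \<and> gg y$1 \<le> real (Suc i) * (1 - \<bar>gg y$2\<bar>)"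
proof -
  obtain e where e: "e \<in> DD" and y0: "\<And>z. 0 \<le> y z" and yz: "\<And>z. z \<notin> e \<Longrightarrow> y z = 0"
    and ys: "sum y e = 1"
    using assms unfolding geom_realisation_def by blast
  obtain i d where i: "i < kk" and d: "d = c \<or> d = c'" and ed: "e = facet d i"
    using e unfolding DD_def by blast
  have il: "Suc i < length xs" using i kk_len by simp
  have ne: "xs!i \<noteq> xs!Suc i" using il by simp
  have yj: "y (xs!j) = 0" if "j < length xs" "j \<noteq> i" "j \<noteq> Suc i" for j
    using that il d by (intro yz) (auto simp: ed facet_def)
  have g1: "gg y $ 1 = real i * y (xs!i) + real (Suc i) * y (xs!Suc i)"
    unfolding gg1 by (rule sum_two_nz[OF il]) (simp add: yj)
  have sum3: "y d + y (xs!i) + y (xs!Suc i) = 1"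
    using ys ne il d cc by (auto simp: ed facet_def)
  have si: "real i * (y d + y (xs!i) + y (xs!Suc i)) = real i" using sum3 by simp
  have p0: "0 \<le> y (xs!i)" "0 \<le> y (xs!Suc i)" "0 \<le> y c" "0 \<le> y c'" by (rule y0)+
  have b1: "real i * (y (xs!i) + y (xs!Suc i)) \<le> gg y$1"
    using p0 unfolding g1 by (simp add: algebra_simps)
  have b2: "gg y$1 \<le> real (Suc i) * (y (xs!i) + y (xs!Suc i))"
    using p0 unfolding g1 by (simp add: algebra_simps)
  show ?thesis
    using d
  proof
    assume dc: "d = c"
    have yc': "y c' = 0" using il cc dc by (intro yz) (auto simp: ed facet_def)
    have "y = pt i (gg y$1) (gg y$2)"
    proof
      fix z
      show "y z = pt i (gg y$1) (gg y$2) z"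
        using si yc' dc il sum3 y0[of c] yz[of z] cc
        by (auto simp: pt_def g1 gg2 ed facet_def algebra_simps)
    qed
    moreover have "1 - \<bar>gg y$2\<bar> = y (xs!i) + y (xs!Suc i)" "\<bar>gg y$2\<bar> \<le> 1"
      using yc' dc sum3 p0 by (auto simp: gg2)
    ultimately show ?thesis using i b1 b2 by auto
  next
    assume dc: "d = c'"
    have yc: "y c = 0" using il cc dc by (intro yz) (auto simp: ed facet_def)
    have "y = pt i (gg y$1) (gg y$2)"
    proof
      fix z
      show "y z = pt i (gg y$1) (gg y$2) z"
        using si yc dc il sum3 y0[of c'] yz[of z] cc
        by (auto simp: pt_def g1 gg2 ed facet_def algebra_simps)
    qed
    moreover have "1 - \<bar>gg y$2\<bar> = y (xs!i) + y (xs!Suc i)" "\<bar>gg y$2\<bar> \<le> 1"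
      using yc dc sum3 p0 by (auto simp: gg2)
    ultimately show ?thesis using i b1 b2 by auto
  qed
qed

lemma ff_in:
  assumes "p \<in> KK"
  shows "ff p \<in> geom_realisation DD" "gg (ff p) = p"
proof -
  obtain i where i: "i < kk" "real i * rr p \<le> p$1" "p$1 \<le> real (Suc i) * rr p"
    using exists_i[OF assms] by blast
  have e: "ff p = pt i (p$1) (p$2)" by (rule ff_pt[OF assms i])
  show "ff p \<in> geom_realisation DD" unfolding e
    using i assms by (intro pt_in) (auto simp: KK_def rr_def)
  show "gg (ff p) = p" unfolding e
    using gg_pt[OF i(1)] by (simp add: vec_eq_iff forall_2)
qed

lemma gg_in:
  assumes "y \<in> geom_realisation DD"
  shows "gg y \<in> KK" "ff (gg y) = y"
proof -
  obtain i where i: "i < kk" and ye: "y = pt i (gg y$1) (gg y$2)" and b: "\<bar>gg y$2\<bar> \<le> 1"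
     "real i * (1 - \<bar>gg y$2\<bar>) \<le> gg y$1" "gg y$1 \<le> real (Suc i) * (1 - \<bar>gg y$2\<bar>)"
    using R_char[OF assms] by blast
  have "real (Suc i) * (1 - \<bar>gg y$2\<bar>) \<le> real kk * (1 - \<bar>gg y$2\<bar>)"
    using i b by (intro mult_right_mono) auto
  moreover have "0 \<le> real i * (1 - \<bar>gg y$2\<bar>)" using b by simp
  ultimately have "0 \<le> gg y$1" "gg y$1 \<le> real kk * (1 - \<bar>gg y$2\<bar>)" using b by linarith+
  then show K: "gg y \<in> KK" using b by (simp add: KK_def rr_def)
  have "ff (gg y) = pt i (gg y$1) (gg y$2)"
    by (rule ff_pt[OF K i]) (use b in \<open>auto simp: rr_def\<close>)
  then show "ff (gg y) = y" using ye by simp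
qed

lemma ff_cont: "continuous_on S ff"
proof (rule continuous_on_coordinatewise_then_product)
  fix z
  show "continuous_on S (\<lambda>p. ff p z)"
  proof (cases "z = c \<or> z = c'")
    case True
    then show ?thesis using cc unfolding ff_def by (auto intro!: continuous_intros)
  next
    case False
    have "continuous_on S (\<lambda>p. if xs!j = z then HH j p else 0)" for j
      by (cases "xs!j = z") (auto simp: HH_def rr_def intro!: continuous_intros)
    then show ?thesis using False unfolding ff_def by (auto intro!: continuous_on_sum)
  qed
qed

lemma gg_cont: "continuous_on S gg"
  unfolding gg_def
proof (intro continuous_on_vec_lambda)
  fix i :: 2
  show "continuous_on S (\<lambda>x. if i = 1 then (\<Sum>j<length xs. real j * x (xs!j)) else x c - x c')"
  proof -
    have pc: "continuous_on S (\<lambda>x::'a\<Rightarrow>real. x a)" for a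
      by (rule continuous_on_subset[OF continuous_on_product_coordinates]) simp
    have "continuous_on S (\<lambda>x. (\<Sum>j<length xs. real j * x (xs!j)))"
      by (intro continuous_on_sum continuous_on_mult_left pc)
    moreover have "continuous_on S (\<lambda>x. x c - x c')"
      by (intro continuous_on_diff pc)
    ultimately show ?thesis by (cases "i = 1") auto
  qed
qed

lemma KK_convex: "convex KK"
  unfolding convex_def
proof (intro ballI allI impI)
  fix x y :: "real^2" and u v :: real
  assume x: "x \<in> KK" and y: "y \<in> KK" and uv: "0 \<le> u" "0 \<le> v" "u + v = 1"
  have x1: "0 \<le> x$1" "x$1 \<le> real kk * (1 - \<bar>x$2\<bar>)" "\<bar>x$2\<bar> \<le> 1" using x by (auto simp: KK_def rr_def)
  have y1: "0 \<le> y$1" "y$1 \<le> real kk * (1 - \<bar>y$2\<bar>)" "\<bar>y$2\<bar> \<le> 1" using y by (auto simp: KK_def rr_def)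
  have a: "\<bar>u * x$2 + v * y$2\<bar> \<le> u * \<bar>x$2\<bar> + v * \<bar>y$2\<bar>"
    using uv by (metis abs_mult abs_of_nonneg abs_triangle_ineq)
  have b1: "u * x$1 \<le> u * (real kk * (1 - \<bar>x$2\<bar>))" using uv x1 by (intro mult_left_mono) auto
  have b2: "v * y$1 \<le> v * (real kk * (1 - \<bar>y$2\<bar>))" using uv y1 by (intro mult_left_mono) auto
  have b3: "real kk * (u * \<bar>x$2\<bar> + v * \<bar>y$2\<bar>) \<le> real kk * 1"
  proof (rule mult_left_mono)
    have "u * \<bar>x$2\<bar> \<le> u" "v * \<bar>y$2\<bar> \<le> v" using uv x1 y1 by (auto simp: mult_left_le)
    then show "u * \<bar>x$2\<bar> + v * \<bar>y$2\<bar> \<le> 1" using uv by linarith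
  qed simp
  have b4: "real kk * \<bar>u * x$2 + v * y$2\<bar> \<le> real kk * (u * \<bar>x$2\<bar> + v * \<bar>y$2\<bar>)"
    using a by (intro mult_left_mono) auto
  have "u * x$1 + v * y$1 \<le> real kk * (1 - \<bar>u * x$2 + v * y$2\<bar>)"
  proof -
    have "u * x$1 + v * y$1 \<le> real kk * (u + v) - real kk * (u * \<bar>x$2\<bar> + v * \<bar>y$2\<bar>)"
      using b1 b2 by (simp add: algebra_simps)
    then show ?thesis using b4 uv by (simp add: algebra_simps)
  qed
  moreover have "0 \<le> u * x$1 + v * y$1" using uv x1 y1 by simp
  moreover have "\<bar>u * x$2 + v * y$2\<bar> \<le> 1" using a b3 uv kk_len
    by (smt (verit, best) mult_left_le x1(3) y1(3))
  ultimately show "u *\<^sub>R x + v *\<^sub>R y \<in> KK" by (simp add: KK_def rr_def)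
qed

lemma KK_compact: "compact KK"
unfolding compact_eq_bounded_closed
proof (intro conjI)
  show "bounded KK"
    unfolding bounded_iff
  proof (intro exI ballI)
    fix x :: "real^2" assume x: "x \<in> KK"
    have "\<bar>x$1\<bar> \<le> real kk" "\<bar>x$2\<bar> \<le> 1"
    proof -
      have "real kk * (1 - \<bar>x$2\<bar>) \<le> real kk * 1" by (rule mult_left_mono) auto
      then show "\<bar>x$1\<bar> \<le> real kk" using x by (auto simp: KK_def rr_def)
    qed (use x in \<open>auto simp: KK_def\<close>)
    then show "norm x \<le> real kk + 1" using norm_le_l1_cart[of x] by (simp add: sum_2)
  qed
  show "closed KK"
    unfolding KK_def rr_def
    by (intro closed_Collect_conj closed_Collect_le continuous_intros)
qed

lemma KK_interior: "interior KK \<noteq> {}"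
proof -
  define p0 :: "real^2" where "p0 = (\<chi> i. if i = 1 then 1/2 else 0)"
  have "ball p0 (1/8) \<subseteq> KK"
  proof
    fix q assume "q \<in> ball p0 (1/8)"
    then have d: "norm (q - p0) < 1/8" by (simp add: dist_norm norm_minus_commute)
    have "\<bar>(q - p0)$1\<bar> < 1/8" "\<bar>(q - p0)$2\<bar> < 1/8"
      using component_le_norm_cart[of "q - p0"] d by (meson le_less_trans)+
    then have q: "\<bar>q$1 - 1/2\<bar> < 1/8" "\<bar>q$2\<bar> < 1/8" by (auto simp: p0_def)
    have "real 2 * (1 - \<bar>q$2\<bar>) \<le> real kk * (1 - \<bar>q$2\<bar>)"
      using kk_len q by (intro mult_right_mono) auto
    moreover have "0 \<le> q$1" "q$1 \<le> 1" "\<bar>q$2\<bar> \<le> 1" "1 \<le> real 2 * (1 - \<bar>q$2\<bar>)"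
      using q by (simp_all, arith+)
    ultimately show "q \<in> KK" unfolding KK_def rr_def by simp
  qed
  then have "p0 \<in> interior KK" by (meson mem_interior zero_less_divide_1_iff zero_less_numeral)
  then show ?thesis by auto
qed

lemma disk_homeo: "geom_realisation DD homeomorphic cball (0::real^2) 1"
proof -
  have "homeomorphism KK (geom_realisation DD) ff gg"
    unfolding homeomorphism_def
  proof (intro conjI ballI ff_cont gg_cont)
    show "ff ` KK = geom_realisation DD"
      using ff_in(1) gg_in by (auto intro!: image_eqI)
    show "gg ` geom_realisation DD = KK"
      using gg_in(1) ff_in by (auto intro!: image_eqI)
  qed (auto simp: ff_in gg_in)
  then have "KK homeomorphic geom_realisation DD" unfolding homeomorphic_def by blast
  moreover have "KK homeomorphic cball (0::real^2) 1"
    by (rule homeomorphic_convex_compact_cball[OF KK_convex KK_compact KK_interior]) simp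
  ultimately show ?thesis by (meson homeomorphic_sym homeomorphic_trans)
qed

lemma card_ne1: "finite A \<Longrightarrow> a \<in> A \<Longrightarrow> b \<in> A \<Longrightarrow> a \<noteq> b \<Longrightarrow> card A \<noteq> 1"
  by (auto simp: card_1_singleton_iff)

lemma DD_finite: "finite DD" by (simp add: DD_def)

lemma facet_card: "i < kk \<Longrightarrow> (d = c \<or> d = c') \<Longrightarrow> card (facet d i) = 3"
  using kk_len by (auto simp: facet_def)

lemma facet_mem: "i < kk \<Longrightarrow> (d = c \<or> d = c') \<Longrightarrow> facet d i \<in> DD"
  by (auto simp: DD_def)

lemma facet_cc: "i < kk \<Longrightarrow> facet c i \<noteq> facet c' i"
proof
  assume i: "i < kk" and e: "facet c i = facet c' i"
  have "c \<in> facet c' i" unfolding e[symmetric] by (simp add: facet_def)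
  then show False using i kk_len cc by (auto simp: facet_def)
qed

lemma DD_card: "2 \<le> card DD"
proof -
  have "{facet c 0, facet c' 0} \<subseteq> DD" using kk_len by (auto simp: DD_def)
  then have "card {facet c 0, facet c' 0} \<le> card DD" by (rule card_mono[OF DD_finite])
  then show ?thesis using facet_cc[of 0] kk_len by simp
qed

lemma skel:
  assumes "f \<in> skeleton DD"
  shows "(\<exists>d j. (d = c \<or> d = c') \<and> j < length xs \<and> f = {d, xs!j}) \<or> (\<exists>m<kk. f = {xs!m, xs!Suc m})"
proof -
  obtain a b e where f: "f = {a, b}" "a \<noteq> b" "e \<in> DD" "{a, b} \<subseteq> e"
    using assms unfolding skeleton_def by blast
  obtain m d where m: "m < kk" "d = c \<or> d = c'" "e = facet d m" using f(3) unfolding DD_def by blast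
  have ml: "m < length xs" "Suc m < length xs" using m kk_len by auto
  have "a \<in> {d, xs!m, xs!Suc m}" "b \<in> {d, xs!m, xs!Suc m}" using f m by (auto simp: facet_def)
  then have "(a = d \<and> (b = xs!m \<or> b = xs!Suc m)) \<or> (b = d \<and> (a = xs!m \<or> a = xs!Suc m))
     \<or> {a, b} = {xs!m, xs!Suc m}" using f(2) by auto
  then show ?thesis
  proof (elim disjE conjE)
    assume "a = d" "b = xs!m" then show ?thesis using f(1) m ml by blast
  next
    assume "a = d" "b = xs!Suc m" then show ?thesis using f(1) m ml by blast
  next
    assume "b = d" "a = xs!m" then show ?thesis using f(1) m ml by (metis insert_commute)
  next
    assume "b = d" "a = xs!Suc m" then show ?thesis using f(1) m ml by (metis insert_commute)
  next
    assume "{a, b} = {xs!m, xs!Suc m}" then show ?thesis using f(1) m by blast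
  qed
qed

lemma cnt_end:
  assumes "j = 0 \<or> j = kk" "d = c \<or> d = c'"
  shows "{e \<in> DD. {d, xs!j} \<subseteq> e} = {facet d (if j = 0 then 0 else kk - 1)}"
proof
  have "facet d (if j = 0 then 0 else kk - 1) \<in> DD" using assms kk_len by (intro facet_mem) auto
  moreover have "{d, xs!j} \<subseteq> facet d (if j = 0 then 0 else kk - 1)" using assms kk_len by (auto simp: facet_def)
  ultimately show "{facet d (if j = 0 then 0 else kk - 1)} \<subseteq> {e \<in> DD. {d, xs!j} \<subseteq> e}" by auto
  show "{e \<in> DD. {d, xs!j} \<subseteq> e} \<subseteq> {facet d (if j = 0 then 0 else kk - 1)}"
  proof
    fix e assume e: "e \<in> {e \<in> DD. {d, xs!j} \<subseteq> e}"
    then obtain m d' where m: "m < kk" "d' = c \<or> d' = c'" "e = facet d' m" unfolding DD_def by blast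
    have ml: "m < length xs" "Suc m < length xs" "j < length xs" using m assms kk_len by auto
    have "d \<in> {d', xs!m, xs!Suc m}" "xs!j \<in> {d', xs!m, xs!Suc m}" using e m by (auto simp: facet_def)
    then have dd: "d = d'" and "j = m \<or> j = Suc m" using ml assms(2) m(2) cc by auto
    then have "m = (if j = 0 then 0 else kk - 1)" using assms(1) m(1) by auto
    then show "e \<in> {facet d (if j = 0 then 0 else kk - 1)}" using m(3) dd by simp
  qed
qed

lemma bedges: "boundary_edges DD = {{c, xs!0}, {c, xs!kk}, {c', xs!0}, {c', xs!kk}}"
proof
  show "boundary_edges DD \<subseteq> {{c, xs!0}, {c, xs!kk}, {c', xs!0}, {c', xs!kk}}"
  proof
    fix f assume f: "f \<in> boundary_edges DD"
    then have fs: "f \<in> skeleton DD" and c1: "card {e \<in> DD. f \<subseteq> e} = 1"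
      unfolding boundary_edges_def by auto
    have fin: "finite {e \<in> DD. f \<subseteq> e}" using DD_finite by simp
    from skel[OF fs] show "f \<in> {{c, xs!0}, {c, xs!kk}, {c', xs!0}, {c', xs!kk}}"
    proof
      assume "\<exists>d j. (d = c \<or> d = c') \<and> j < length xs \<and> f = {d, xs!j}"
      then obtain d j where dj: "d = c \<or> d = c'" "j < length xs" "f = {d, xs!j}" by blast
      show ?thesis
      proof (cases "j = 0 \<or> j = kk")
        case True then show ?thesis using dj by auto
      next
        case False
        then have j: "0 < j" "j < kk" using dj kk_len by auto
        have "facet d (j - 1) \<in> DD" "facet d j \<in> DD" using j dj by (auto intro!: facet_mem)
        moreover have "f \<subseteq> facet d (j - 1)" "f \<subseteq> facet d j" using j dj by (auto simp: facet_def)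
        ultimately have "facet d (j - 1) \<in> {e \<in> DD. f \<subseteq> e}" "facet d j \<in> {e \<in> DD. f \<subseteq> e}" by auto
        moreover have "facet d (j - 1) \<noteq> facet d j"
        proof
          assume "facet d (j - 1) = facet d j"
          then have "xs!(j-1) \<in> {d, xs!j, xs!Suc j}" unfolding facet_def by blast
          then show False using j dj kk_len by auto
        qed
        ultimately show ?thesis using card_ne1[OF fin] c1 by blast
      qed
    next
      assume "\<exists>m<kk. f = {xs!m, xs!Suc m}"
      then obtain m where m: "m < kk" "f = {xs!m, xs!Suc m}" by blast
      have "facet c m \<in> DD" "facet c' m \<in> DD" using m by (auto intro!: facet_mem)
      moreover have "f \<subseteq> facet c m" "f \<subseteq> facet c' m" using m by (auto simp: facet_def)
      ultimately have "facet c m \<in> {e \<in> DD. f \<subseteq> e}" "facet c' m \<in> {e \<in> DD. f \<subseteq> e}" by auto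
      then show ?thesis using card_ne1[OF fin] c1 facet_cc[OF m(1)] by blast
    qed
  qed
  show "{{c, xs!0}, {c, xs!kk}, {c', xs!0}, {c', xs!kk}} \<subseteq> boundary_edges DD"
  proof -
    have "{d, xs!j} \<in> boundary_edges DD" if "j = 0 \<or> j = kk" "d = c \<or> d = c'" for d j
    proof -
      have "{d, xs!j} \<in> skeleton DD"
      proof -
        have "{d, xs!j} \<subseteq> facet d (if j = 0 then 0 else kk - 1)"
          using that kk_len by (auto simp: facet_def)
        moreover have "facet d (if j = 0 then 0 else kk - 1) \<in> DD" using that kk_len by (auto intro!: facet_mem)
        moreover have jl: "j < length xs" using that len_simps(1,2) by metis
        moreover have "d \<noteq> xs!j" using that(2) nth_ne_c(3,4)[OF jl] by blast
        ultimately show ?thesis unfolding skeleton_def by blast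
      qed
      then show ?thesis unfolding boundary_edges_def using cnt_end[OF that] by simp
    qed
    then show ?thesis by auto
  qed
qed

lemma bverts: "boundary_vertices DD = {c, c', xs!0, xs!kk}"
  unfolding boundary_vertices_def bedges by auto

lemma interior_sub: "interior_vertices DD \<subseteq> set (butlast (tl xs))"
proof
  fix z assume z: "z \<in> interior_vertices DD"
  then obtain e where e: "e \<in> DD" "z \<in> e" unfolding interior_vertices_def by auto
  have zb: "z \<notin> {c, c', xs!0, xs!kk}" using z unfolding interior_vertices_def bverts by auto
  obtain m d where m: "m < kk" "d = c \<or> d = c'" "e = facet d m" using e unfolding DD_def by blast
  have "z = xs!m \<or> z = xs!Suc m" using e m zb by (auto simp: facet_def)
  then obtain j where j: "j < length xs" "z = xs!j" using m kk_len by auto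
  have "j \<noteq> 0" "j \<noteq> kk" using zb j by (metis insertCI)+
  then have j2: "0 < j" "j < kk" using j kk_len by auto
  have "butlast (tl xs) ! (j - 1) = xs!j"
    using j j2 kk_len by (simp add: nth_butlast nth_tl)
  moreover have "j - 1 < length (butlast (tl xs))" using j2 kk_len by simp
  ultimately show "z \<in> set (butlast (tl xs))" using j by (metis nth_mem)
qed

lemma induced: "\<forall>f\<in>skeleton DD. f \<subseteq> boundary_vertices DD \<longrightarrow> f \<in> boundary_edges DD"
proof (intro ballI impI)
  fix f assume fs: "f \<in> skeleton DD" and fb: "f \<subseteq> boundary_vertices DD"
  from skel[OF fs] show "f \<in> boundary_edges DD"
  proof
    assume "\<exists>d j. (d = c \<or> d = c') \<and> j < length xs \<and> f = {d, xs!j}"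
    then obtain d j where dj: "d = c \<or> d = c'" "j < length xs" "f = {d, xs!j}" by blast
    have "xs!j \<in> {xs!0, xs!kk}" using fb dj unfolding bverts by auto
    moreover have "0 < length xs" "kk < length xs" using kk_len by auto
    ultimately have "j = 0 \<or> j = kk" using dj by auto
    then show ?thesis unfolding bedges using dj by auto
  next
    assume "\<exists>m<kk. f = {xs!m, xs!Suc m}"
    then obtain m where m: "m < kk" "f = {xs!m, xs!Suc m}" by blast
    have "xs!m \<in> {xs!0, xs!kk}" "xs!Suc m \<in> {xs!0, xs!kk}" using fb m unfolding bverts by auto
    moreover have "0 < length xs" "kk < length xs" "m < length xs" "Suc m < length xs" using kk_len m by auto
    ultimately have False using m kk_len by auto
    then show ?thesis ..
  qed
qed

lemma DD_bi: "boundary_inducing DD"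
  unfolding boundary_inducing_def is_disk_def
  using DD_finite disk_homeo DD_card induced
  by (auto simp: DD_def facet_card)

end


lemma rsp_mono:
  assumes "0 \<le> p" "p \<le> 1" "\<And>U. U \<subseteq> S \<Longrightarrow> Q U \<Longrightarrow> P U"
  shows "rand_subset_prob S p Q \<le> rand_subset_prob S p P"
  unfolding rand_subset_prob_def
  by (rule sum_mono) (use assms in auto)

lemma rsp_insert:
  fixes W :: "'a set"
  assumes fin: "finite W" and x: "x \<notin> W" and R: "\<And>U. R (insert x U) = R U"
  shows "rand_subset_prob (insert x W) p R = rand_subset_prob W p R"
proof -
  let ?t = "\<lambda>V U. if R U then p ^ card U * (1 - p) ^ card (V - U) else 0"
  have disj: "Pow W \<inter> insert x ` Pow W = {}" using x by auto
  have inj: "inj_on (insert x) (Pow W)"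
  proof (rule inj_onI)
    fix A B assume A: "A \<in> Pow W" and B: "B \<in> Pow W" and e: "insert x A = insert x B"
    have "A = insert x A - {x}" "B = insert x B - {x}" using A B x by auto
    then show "A = B" using e by simp
  qed
  have "rand_subset_prob (insert x W) p R = sum (?t (insert x W)) (Pow W) + sum (?t (insert x W)) (insert x ` Pow W)"
    unfolding rand_subset_prob_def Pow_insert using fin disj by (simp add: sum.union_disjoint)
  also have "sum (?t (insert x W)) (insert x ` Pow W) = sum (\<lambda>U. ?t (insert x W) (insert x U)) (Pow W)"
    by (rule sum.reindex[OF inj, unfolded comp_def])
  also have "sum (?t (insert x W)) (Pow W) + sum (\<lambda>U. ?t (insert x W) (insert x U)) (Pow W)
      = sum (\<lambda>U. ?t (insert x W) U + ?t (insert x W) (insert x U)) (Pow W)"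
    by (simp add: sum.distrib)
  also have "\<dots> = sum (?t W) (Pow W)"
  proof (rule sum.cong[OF refl])
    fix U assume U: "U \<in> Pow W"
    have fU: "finite U" using U fin finite_subset by auto
    have xU: "x \<notin> U" using U x by auto
    have c1: "card (insert x W - U) = Suc (card (W - U))"
    proof -
      have "insert x W - U = insert x (W - U)" using xU by auto
      then show ?thesis using fin x by simp
    qed
    have c2: "insert x W - insert x U = W - U" using x by auto
    have c3: "card (insert x U) = Suc (card U)" using fU xU by simp
    show "?t (insert x W) U + ?t (insert x W) (insert x U) = ?t W U"
      using R[of U] c1 c2 c3 by (simp add: algebra_simps)
  qed
  finally show ?thesis unfolding rand_subset_prob_def .
qed

lemma rsp_marg:
  assumes "finite S" "finite T"
  shows "rand_subset_prob (S \<union> T) p (\<lambda>U. Q (U \<inter> S)) = rand_subset_prob S p Q"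
  using assms(2)
proof (induction T rule: finite_induct)
  case empty
  show ?case unfolding rand_subset_prob_def
    by (rule sum.cong) (auto simp: Int_absorb2)
next
  case (insert x F)
  show ?case
  proof (cases "x \<in> S")
    case True
    then have "S \<union> insert x F = S \<union> F" by auto
    then show ?thesis using insert.IH by simp
  next
    case False
    have "S \<union> insert x F = insert x (S \<union> F)" by auto
    moreover have "rand_subset_prob (insert x (S \<union> F)) p (\<lambda>U. Q (U \<inter> S)) =
        rand_subset_prob (S \<union> F) p (\<lambda>U. Q (U \<inter> S))"
      by (rule rsp_insert) (use False insert assms in auto)
    ultimately show ?thesis using insert.IH by simp
  qed
qed


lemma link_mem: "{a, b} \<in> link_edges E d \<Longrightarrow> {d, a, b} \<in> E"
proof -
  assume "{a, b} \<in> link_edges E d"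
  then obtain x y where "{d, x, y} \<in> E" "{a, b} = {x, y}" unfolding link_edges_def by blast
  then show ?thesis by simp
qed

lemma skel_intro: "x \<noteq> y \<Longrightarrow> e \<in> E \<Longrightarrow> {x, y} \<subseteq> e \<Longrightarrow> {x, y} \<in> skeleton E"
  unfolding skeleton_def by blast

theorem proposition3p3:
  fixes V :: "'a set" and E :: "'a set set" and v v' w u w' :: 'a and p eps :: real
  assumes "hypergraph3 V E"
    and "v \<in> V" and "v' \<in> V" and "v \<noteq> v'"
    and "0 \<le> p" and "p \<le> 1"
    and "is_path ((V - {v}) \<inter> (V - {v'})) (link_edges E v \<inter> link_edges E v') [w, u, w']"
    and "admissible ((V - {v}) \<inter> (V - {v'})) (link_edges E v \<inter> link_edges E v') p eps w u w'"
  shows "disk_coverable V E p eps {{v, w}, {w, v'}, {v', w'}, {w', v}}"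
proof -
  define VG where "VG = (V - {v}) \<inter> (V - {v'})"
  define EG where "EG = link_edges E v \<inter> link_edges E v'"
  define S where "S = VG - {u}"
  define C where "C = {{v, w}, {w, v'}, {v', w'}, {w', v}}"
  define Q where "Q = (\<lambda>U. \<exists>xs. is_path VG EG xs \<and> length xs \<ge> 3 \<and> hd xs = w \<and> last xs = w' \<and>
               set (butlast (tl xs)) \<subseteq> U)"
  define P where "P = (\<lambda>U. \<exists>D. D \<subseteq> E \<and> boundary_inducing D \<and> boundary_edges D = C \<and>
               interior_vertices D \<subseteq> U)"
  have finV: "finite V" using assms(1) by (simp add: hypergraph3_def)
  have SV: "S \<subseteq> V" by (auto simp: S_def VG_def)
  have finS: "finite S" using finite_subset[OF SV finV] .
  have vv: "v \<noteq> v'" by fact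
  have edge: "{d, a, b} \<in> E" if "{a, b} \<in> EG" "d = v \<or> d = v'" for a b d
    using that(2) link_mem[of a b E v] link_mem[of a b E v'] that(1) unfolding EG_def by auto
  have p3: "is_path VG EG [w, u, w']" using assms(7) by (simp add: VG_def EG_def)
  then have wu: "{w, u} \<in> EG" "{u, w'} \<in> EG" and wv: "w \<in> VG" "u \<in> VG" "w' \<in> VG"
    unfolding is_path_def by (auto dest: spec[of _ 0] spec[of _ 1])
  have wne: "w \<noteq> v" "w \<noteq> v'" "w' \<noteq> v" "w' \<noteq> v'" using wv by (auto simp: VG_def)
  have Csk: "C \<subseteq> skeleton E"
  proof -
    have e: "{v, w, u} \<in> E" "{v', w, u} \<in> E" "{v, u, w'} \<in> E" "{v', u, w'} \<in> E"
      using edge wu by auto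
    have "{v, w} \<in> skeleton E" by (rule skel_intro[OF _ e(1)]) (use wne in auto)
    moreover have "{w, v'} \<in> skeleton E" by (rule skel_intro[OF _ e(2)]) (use wne in auto)
    moreover have "{v', w'} \<in> skeleton E" by (rule skel_intro[OF _ e(4)]) (use wne in auto)
    moreover have "{w', v} \<in> skeleton E" by (rule skel_intro[OF _ e(3)]) (use wne in auto)
    ultimately show ?thesis by (simp add: C_def)
  qed
  have QP: "P U" if QU: "Q (U \<inter> S)" for U
  proof -
    obtain xs where xs: "is_path VG EG xs" "length xs \<ge> 3" "hd xs = w" "last xs = w'"
      "set (butlast (tl xs)) \<subseteq> U \<inter> S"
      using QU unfolding Q_def by blast
    have dxs: "distinct xs" and sx: "set xs \<subseteq> VG" using xs(1) by (auto simp: is_path_def)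
    have vx: "v \<notin> set xs" "v' \<notin> set xs" using sx by (auto simp: VG_def)
    have ne: "xs \<noteq> []" using xs(2) by auto
    have h0: "xs!0 = w" using xs(3) hd_conv_nth[OF ne] by simp
    have "Suc (kk xs) = length xs" by (rule kk_len(1)[OF dxs xs(2) vx vv])
    then have "length xs - Suc 0 = kk xs" by arith
    then have hk: "xs ! kk xs = w'" using xs(4) last_conv_nth[OF ne] by simp
    have "DD xs v v' \<subseteq> E"
    proof
      fix e assume "e \<in> DD xs v v'"
      then obtain i d where i: "i < kk xs" "d = v \<or> d = v'" "e = facet xs d i"
        unfolding DD_def[OF dxs xs(2) vx vv] by blast
      have "Suc i < length xs" using i(1) kk_len(1)[OF dxs xs(2) vx vv] by simp
      then have "{xs!i, xs!Suc i} \<in> EG" using xs(1) unfolding is_path_def by blast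
      then show "e \<in> E" using edge i by (simp add: facet_def[OF dxs xs(2) vx vv])
    qed
    moreover have "boundary_inducing (DD xs v v')"
      by (rule DD_bi[OF dxs xs(2) vx vv])
    moreover have "boundary_edges (DD xs v v') = C"
    proof -
      have "{w, v'} = {v', w}" "{w', v} = {v, w'}" by auto
      then show ?thesis unfolding bedges[OF dxs xs(2) vx vv] h0 hk C_def by auto
    qed
    moreover have "interior_vertices (DD xs v v') \<subseteq> U"
      using interior_sub[OF dxs xs(2) vx vv] xs(5) by blast
    ultimately show ?thesis unfolding P_def by blast
  qed
  have "1 - eps \<le> rand_subset_prob S p Q"
    using assms(8) by (simp add: admissible_def S_def Q_def VG_def EG_def)
  also have "rand_subset_prob S p Q = rand_subset_prob (S \<union> V) p (\<lambda>U. Q (U \<inter> S))"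
    by (rule rsp_marg[symmetric, OF finS finV])
  also have "S \<union> V = V" using SV by auto
  also have "rand_subset_prob V p (\<lambda>U. Q (U \<inter> S)) \<le> rand_subset_prob V p P"
    by (rule rsp_mono[OF assms(5,6)]) (use QP in blast)
  finally have "1 - eps \<le> rand_subset_prob V p P" .
  then show ?thesis
    unfolding disk_coverable_def using Csk by (simp add: C_def P_def)
qed

end
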